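(* Let $G$ be a connected graph of order $n\ge 4$ such that $px_k(G)=2$ for each integer $k$ with $3\leq k\leq n-1$. Then $px_n(G)=2$ if $G$ is traceable (has a Hamilton path), and $px_n(G)=3$ otherwise.
   Context: All graphs are finite, simple, undirected and connected. An edge-coloring of a graph assigns a color to each edge (adjacent edges may receive the same color). A tree in an edge-colored graph is proper if any two adjacent edges of the tree receive different colors. For $S\subseteq V(G)$, an $S$-tree is a subgraph of $G$ that is a tree containing all vertices of $S$. For a connected graph $G$ of order $n$ and an integer $k$ with $2\le k\le n$, an edge-coloring of $G$ is a $k$-proper coloring if for every set $S$ of $k$ vertices of $G$ there exists a proper $S$-tree in $G$. The $k$-proper index $px_k(G)$ is the minimum number of colors used in a $k$-proper coloring of $G$. *)

theory Defs
  imports Main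
begin

definition simple_graph :: "'a set \<Rightarrow> 'a set set \<Rightarrow> bool" where
  "simple_graph V E \<longleftrightarrow> finite V \<and>
     (\<forall>e\<in>E. \<exists>x y. x \<in> V \<and> y \<in> V \<and> x \<noteq> y \<and> e = {x, y})"

definition connected_graph :: "'a set \<Rightarrow> 'a set set \<Rightarrow> bool" where
  "connected_graph W T \<longleftrightarrow> W \<noteq> {} \<and>
     (\<forall>u\<in>W. \<forall>v\<in>W. (u, v) \<in> {(x, y). {x, y} \<in> T}\<^sup>*)"

definition has_cycle :: "'a set set \<Rightarrow> bool" where
  "has_cycle T \<longleftrightarrow> (\<exists>vs. length vs \<ge> 3 \<and> distinct vs \<and>
     (\<forall>i. Suc i < length vs \<longrightarrow> {vs ! i, vs ! Suc i} \<in> T) \<and>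
     {last vs, hd vs} \<in> T)"

definition is_subtree :: "'a set \<Rightarrow> 'a set set \<Rightarrow> 'a set \<Rightarrow> 'a set set \<Rightarrow> bool" where
  "is_subtree V E W T \<longleftrightarrow> W \<subseteq> V \<and> T \<subseteq> E \<and> (\<forall>e\<in>T. e \<subseteq> W) \<and>
     connected_graph W T \<and> \<not> has_cycle T"

definition proper_tree :: "('a set \<Rightarrow> nat) \<Rightarrow> 'a set set \<Rightarrow> bool" where
  "proper_tree c T \<longleftrightarrow> (\<forall>e\<in>T. \<forall>f\<in>T. e \<noteq> f \<and> e \<inter> f \<noteq> {} \<longrightarrow> c e \<noteq> c f)"

definition k_proper_coloring :: "'a set \<Rightarrow> 'a set set \<Rightarrow> nat \<Rightarrow> ('a set \<Rightarrow> nat) \<Rightarrow> bool" where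
  "k_proper_coloring V E k c \<longleftrightarrow>
     (\<forall>S. S \<subseteq> V \<and> card S = k \<longrightarrow>
        (\<exists>W T. is_subtree V E W T \<and> S \<subseteq> W \<and> proper_tree c T))"

definition proper_index :: "'a set \<Rightarrow> 'a set set \<Rightarrow> nat \<Rightarrow> nat" where
  "proper_index V E k = (LEAST m. \<exists>c. k_proper_coloring V E k c \<and> card (c ` E) = m)"

definition traceable :: "'a set \<Rightarrow> 'a set set \<Rightarrow> bool" where
  "traceable V E \<longleftrightarrow> (\<exists>vs. distinct vs \<and> set vs = V \<and>
     (\<forall>i. Suc i < length vs \<longrightarrow> {vs ! i, vs ! Suc i} \<in> E))"

end

theory Submission
  imports Defs
begin


abbreviation rel_of :: "'a set set \<Rightarrow> ('a \<times> 'a) set" where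
  "rel_of T \<equiv> {(x, y). {x, y} \<in> T}"

lemma rel_sym: "(x, y) \<in> (rel_of T)\<^sup>* \<Longrightarrow> (y, x) \<in> (rel_of T)\<^sup>*"
proof (induction rule: rtrancl_induct)
  case base then show ?case by simp
next
  case (step y z)
  then have "(z, y) \<in> rel_of T" by (simp add: insert_commute)
  then show ?case using step(3) by (rule converse_rtrancl_into_rtrancl)
qed

lemma path_conn:
  assumes "\<forall>i. Suc i < length vs \<longrightarrow> {vs!i, vs!Suc i} \<in> T"
  shows "j < length vs \<Longrightarrow> (vs!0, vs!j) \<in> (rel_of T)\<^sup>*"
proof (induction j)
  case 0 then show ?case by simp
next
  case (Suc j)
  then have "(vs!0, vs!j) \<in> (rel_of T)\<^sup>*" by simp
  moreover have "(vs!j, vs!Suc j) \<in> rel_of T" using assms Suc.prems by simp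
  ultimately show ?case by (rule rtrancl_into_rtrancl)
qed

lemma remove_cycle_edge:
  assumes T: "finite T" and conn: "connected_graph W T" and cyc: "has_cycle T"
  shows "\<exists>e\<in>T. connected_graph W (T - {e})"
proof -
  obtain vs where l: "length vs \<ge> 3" and d: "distinct vs"
    and ch: "\<forall>i. Suc i < length vs \<longrightarrow> {vs ! i, vs ! Suc i} \<in> T"
    and cl: "{last vs, hd vs} \<in> T"
    using cyc unfolding has_cycle_def by blast
  define e where "e = {last vs, hd vs}"
  define l where "l = length vs"
  have hd: "hd vs = vs!0" using l by (cases vs) auto
  have lst: "last vs = vs!(l - 1)" using l unfolding l_def by (subst last_conv_nth) auto
  have ch1: "\<forall>i. Suc i < length vs \<longrightarrow> {vs ! i, vs ! Suc i} \<in> T - {e}"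
  proof (intro allI impI)
    fix i assume i: "Suc i < length vs"
    have "{vs ! i, vs ! Suc i} \<noteq> e"
    proof
      assume "{vs ! i, vs ! Suc i} = e"
      then have "vs!i = vs!(l-1) \<and> vs!Suc i = vs!0 \<or> vs!i = vs!0 \<and> vs!Suc i = vs!(l-1)"
        unfolding e_def hd lst by (simp add: doubleton_eq_iff)
      moreover have "i < l" "Suc i < l" "0 < l" "l - 1 < l" using i l unfolding l_def by auto
      ultimately show False
      proof (elim disjE conjE)
        assume "vs!i = vs!(l-1)" "vs!Suc i = vs!0"
        then have "Suc i = 0" using nth_eq_iff_index_eq[OF d, of "Suc i" 0] \<open>Suc i < l\<close> \<open>0 < l\<close> unfolding l_def by simp
        then show False by simp
      next
        assume "vs!i = vs!0" "vs!Suc i = vs!(l-1)"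
        then have "i = 0" "Suc i = l - 1" using nth_eq_iff_index_eq[OF d, of i 0] nth_eq_iff_index_eq[OF d, of "Suc i" "l - 1"] \<open>Suc i < l\<close> \<open>0 < l\<close> \<open>i < l\<close> \<open>l - 1 < l\<close> unfolding l_def by simp_all
        then show False using l unfolding l_def by simp
      qed
    qed
    then show "{vs ! i, vs ! Suc i} \<in> T - {e}" using ch i by simp
  qed
  have "(vs!0, vs!(l-1)) \<in> (rel_of (T - {e}))\<^sup>*"
    using path_conn[OF ch1, of "l - 1"] l unfolding l_def by simp
  then have p1: "(hd vs, last vs) \<in> (rel_of (T - {e}))\<^sup>*" using hd lst by simp
  have sub: "rel_of T \<subseteq> (rel_of (T - {e}))\<^sup>*"
  proof
    fix p assume "p \<in> rel_of T"
    then obtain x y where p: "p = (x, y)" and xy: "{x, y} \<in> T" by auto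
    show "p \<in> (rel_of (T - {e}))\<^sup>*"
    proof (cases "{x, y} = e")
      case False
      then have "(x, y) \<in> rel_of (T - {e})" using xy by simp
      then show ?thesis using p by (simp add: r_into_rtrancl)
    next
      case True
      then have "x = last vs \<and> y = hd vs \<or> x = hd vs \<and> y = last vs"
        unfolding e_def by (simp add: doubleton_eq_iff)
      moreover have "(last vs, hd vs) \<in> (rel_of (T - {e}))\<^sup>*" using rel_sym[OF p1] .
      ultimately show ?thesis using p p1 by auto
    qed
  qed
  have "connected_graph W (T - {e})"
    using conn rtrancl_subset_rtrancl[OF sub] unfolding connected_graph_def by (meson subsetD)
  then show ?thesis using cl e_def by blast
qed

lemma spanning:
  "finite T0 \<Longrightarrow> connected_graph W T0 \<Longrightarrow> \<exists>T\<subseteq>T0. connected_graph W T \<and> \<not> has_cycle T"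
proof (induction "card T0" arbitrary: T0 rule: less_induct)
  case less
  show ?case
  proof (cases "has_cycle T0")
    case False then show ?thesis using less.prems by blast
  next
    case True
    then obtain e where e: "e \<in> T0" and c: "connected_graph W (T0 - {e})"
      using remove_cycle_edge less.prems by blast
    have "card (T0 - {e}) < card T0" using e less.prems(1) by (intro card_Diff1_less)
    then obtain T where "T \<subseteq> T0 - {e}" "connected_graph W T" "\<not> has_cycle T"
      using less.hyps[of "T0 - {e}"] c less.prems by blast
    then show ?thesis by blast
  qed
qed


lemma crossing:
  assumes "(p, w) \<in> (rel_of T)\<^sup>*" "p \<in> A" "w \<notin> A"
  shows "\<exists>a b. {a, b} \<in> T \<and> a \<in> A \<and> b \<notin> A"
  using assms
proof (induction rule: rtrancl_induct)
  case base then show ?case by simp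
next
  case (step y z)
  show ?case
  proof (cases "y \<in> A")
    case True then show ?thesis using step by blast
  next
    case False then show ?thesis using step by blast
  qed
qed

definition chain :: "'a set set \<Rightarrow> 'a list \<Rightarrow> bool" where
  "chain T vs \<longleftrightarrow> (\<forall>i. Suc i < length vs \<longrightarrow> {vs ! i, vs ! Suc i} \<in> T)"

lemma three_colors:
  assumes "e1 \<in> T" "e2 \<in> T" "e3 \<in> T" "e1 \<noteq> e2" "e1 \<noteq> e3" "e2 \<noteq> e3"
    "x \<in> e1" "x \<in> e2" "x \<in> e3" "proper_tree c T" "finite (c ` T)"
  shows "card (c ` T) \<ge> 3"
proof -
  have "c e1 \<noteq> c e2" "c e1 \<noteq> c e3" "c e2 \<noteq> c e3"
    using assms unfolding proper_tree_def by blast+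
  then have "card {c e1, c e2, c e3} = 3" by simp
  moreover have "{c e1, c e2, c e3} \<subseteq> c ` T" using assms by blast
  ultimately show ?thesis using card_mono[OF assms(11)] by metis
qed

lemma ham:
  assumes fin: "finite W" and conn: "connected_graph W T"
    and sub: "\<forall>e\<in>T. e \<subseteq> W"
    and two: "\<forall>e\<in>T. \<exists>x y. x \<noteq> y \<and> e = {x, y}"
    and prp: "proper_tree c T"
    and finc: "finite (c ` T)" and card2: "card (c ` T) \<le> 2"
  shows "\<exists>vs. distinct vs \<and> set vs = W \<and> chain T vs"
proof -
  let ?P = "\<lambda>vs. distinct vs \<and> set vs \<subseteq> W \<and> vs \<noteq> [] \<and> chain T vs"
  obtain w0 where w0: "w0 \<in> W" using conn unfolding connected_graph_def by blast
  have P0: "?P [w0]" using w0 unfolding chain_def by simp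
  have bnd: "\<forall>vs. ?P vs \<longrightarrow> length vs < card W + 1"
  proof (intro allI impI)
    fix vs assume "?P vs"
    then have "card (set vs) \<le> card W" using fin card_mono by blast
    then show "length vs < card W + 1" using \<open>?P vs\<close> distinct_card by fastforce
  qed
  obtain vs where Pvs: "?P vs" and mx: "\<forall>ws. ?P ws \<longrightarrow> length ws \<le> length vs"
    using Lattices_Big.ex_has_greatest_nat[of ?P "[w0]" length "card W + 1"] P0 bnd by blast
  have d: "distinct vs" and sW: "set vs \<subseteq> W" and ne: "vs \<noteq> []" and ch: "chain T vs"
    using Pvs by auto
  have "set vs = W"
  proof (rule ccontr)
    assume "set vs \<noteq> W"
    then obtain w where w: "w \<in> W" "w \<notin> set vs" using sW by blast
    have "hd vs \<in> W" using sW ne hd_in_set by blast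
    then have "(hd vs, w) \<in> (rel_of T)\<^sup>*" using conn w unfolding connected_graph_def by blast
    then obtain a b where ab: "{a, b} \<in> T" "a \<in> set vs" "b \<notin> set vs"
      using crossing[of "hd vs" w T "set vs"] w ne by auto
    have bW: "b \<in> W" using sub ab by blast
    obtain i where i: "i < length vs" "vs ! i = a" using ab by (meson in_set_conv_nth)
    show False
    proof (cases "i = 0")
      case True
      have "?P (b # vs)"
        unfolding chain_def
      proof (intro conjI allI impI)
        fix j assume j: "Suc j < length (b # vs)"
        show "{(b # vs) ! j, (b # vs) ! Suc j} \<in> T"
        proof (cases j)
          case 0 then show ?thesis using ab True i by (simp add: insert_commute)
        next
          case (Suc k) then show ?thesis using ch j unfolding chain_def by simp
        qed
      qed (use d ab sW bW in auto)
      then show False using mx by fastforce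
    next
      case False
      show False
      proof (cases "i = length vs - 1")
        case True
        have "?P (vs @ [b])"
          unfolding chain_def
        proof (intro conjI allI impI)
          fix j assume j: "Suc j < length (vs @ [b])"
          show "{(vs @ [b]) ! j, (vs @ [b]) ! Suc j} \<in> T"
          proof (cases "Suc j < length vs")
            case True then show ?thesis using ch unfolding chain_def by (simp add: nth_append)
          next
            case False
            then have "j = length vs - 1" using j by simp
            moreover have "Suc (length vs - 1) = length vs" using ne by (cases vs) auto
            ultimately show ?thesis using ab \<open>i = length vs - 1\<close> i by (simp add: nth_append)
          qed
        qed (use d ab sW bW in auto)
        then show False using mx by fastforce
      next
        case False
        have i1: "Suc i < length vs" using False i by auto
        obtain k where k: "i = Suc k" using \<open>i \<noteq> 0\<close> not0_implies_Suc by blast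
        have e1: "{vs ! k, a} \<in> T" using ch i k unfolding chain_def by auto
        have e2: "{a, vs ! Suc i} \<in> T" using ch i1 i unfolding chain_def by auto
        have neq1: "vs ! k \<noteq> vs ! Suc i" using d i1 k nth_eq_iff_index_eq[OF d, of k "Suc i"] by simp
        have neq2: "vs ! k \<noteq> a" using d i k nth_eq_iff_index_eq[OF d, of k i] by simp
        have neq3: "vs ! Suc i \<noteq> a" using d i1 i nth_eq_iff_index_eq[OF d, of "Suc i" i] by simp
        have nb1: "vs ! k \<noteq> b" using ab k i by auto
        have nb2: "vs ! Suc i \<noteq> b" using ab i1 by auto
        have "card (c ` T) \<ge> 3"
          apply (rule three_colors[of "{vs ! k, a}" T "{a, vs ! Suc i}" "{a, b}" a c])
          using e1 e2 ab neq1 neq2 neq3 nb1 nb2 prp finc by (auto simp: doubleton_eq_iff)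
        then show False using card2 by simp
      qed
    qed
  qed
  then show ?thesis using d ch by blast
qed


lemma pendant_acyclic:
  assumes nc: "\<not> has_cycle T" and sub: "\<forall>e\<in>T. e \<subseteq> W" and v: "v \<notin> W" and uv: "u \<noteq> v"
  shows "\<not> has_cycle (insert {u, v} T)"
proof
  assume "has_cycle (insert {u, v} T)"
  then obtain vs where l3: "length vs \<ge> 3" and d: "distinct vs"
    and ch: "\<forall>i. Suc i < length vs \<longrightarrow> {vs ! i, vs ! Suc i} \<in> insert {u, v} T"
    and cl: "{last vs, hd vs} \<in> insert {u, v} T"
    unfolding has_cycle_def by blast
  define l where "l = length vs"
  have hd: "hd vs = vs!0" using l3 by (cases vs) auto
  have lst: "last vs = vs!(l - 1)" using l3 unfolding l_def by (subst last_conv_nth) auto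
  show False
  proof (cases "v \<in> set vs")
    case False
    have "\<forall>i. Suc i < length vs \<longrightarrow> {vs ! i, vs ! Suc i} \<in> T"
    proof (intro allI impI)
      fix i assume i: "Suc i < length vs"
      then have "vs ! i \<noteq> v" using False nth_mem by (metis Suc_lessD)
      moreover have "vs ! Suc i \<noteq> v" using False nth_mem i by metis
      ultimately have "{vs ! i, vs ! Suc i} \<noteq> {u, v}" by (auto simp: doubleton_eq_iff)
      then show "{vs ! i, vs ! Suc i} \<in> T" using ch i by auto
    qed
    moreover have "last vs \<noteq> v" "hd vs \<noteq> v" using False l3
      by (metis last_in_set list.size(3) not_numeral_le_zero, metis hd_in_set list.size(3) not_numeral_le_zero)
    then have "{last vs, hd vs} \<in> T" using cl by (auto simp: doubleton_eq_iff)
    ultimately have "has_cycle T" using l3 d unfolding has_cycle_def by blast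
    then show False using nc by simp
  next
    case True
    then obtain p where p: "p < l" "vs ! p = v" unfolding l_def by (meson in_set_conv_nth)
    have noT: "\<And>x. {x, v} \<notin> T" using sub v by blast
    define q where "q = (if Suc p < l then Suc p else 0)"
    define r where "r = (if p = 0 then l - 1 else p - 1)"
    have q: "q < l" "q \<noteq> p" using p l3 unfolding q_def l_def by auto
    have r: "r < l" "r \<noteq> p" using p l3 unfolding r_def l_def by auto
    have qr: "q \<noteq> r" using p l3 unfolding q_def r_def l_def by auto
    have eq: "{vs ! q, v} \<in> insert {u, v} T"
    proof (cases "Suc p < l")
      case True
      then have "{vs ! p, vs ! Suc p} \<in> insert {u, v} T" using ch unfolding l_def by blast
      then show ?thesis using True p unfolding q_def by (simp add: insert_commute)
    next
      case False then have "p = l - 1" using p by simp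
      then show ?thesis using cl False p hd lst unfolding q_def by (simp add: insert_commute)
    qed
    have er: "{vs ! r, v} \<in> insert {u, v} T"
    proof (cases "p = 0")
      case True then show ?thesis using cl p hd lst unfolding r_def by (simp add: insert_commute)
    next
      case False
      then have "Suc (p - 1) = p" by simp
      then show ?thesis using ch p False unfolding r_def l_def by (metis)
    qed
    have "{vs ! q, v} = {u, v}" using eq noT by blast
    moreover have "vs ! q \<noteq> v" using q p nth_eq_iff_index_eq[OF d, of q p] unfolding l_def by simp
    ultimately have uq: "vs ! q = u" by (auto simp: doubleton_eq_iff)
    have "{vs ! r, v} = {u, v}" using er noT by blast
    moreover have "vs ! r \<noteq> v" using r p nth_eq_iff_index_eq[OF d, of r p] unfolding l_def by simp
    ultimately have ur: "vs ! r = u" by (auto simp: doubleton_eq_iff)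
    show False using uq ur qr q r nth_eq_iff_index_eq[OF d, of q r] unfolding l_def by simp
  qed
qed



lemma sg_edge: "simple_graph V E \<Longrightarrow> e \<in> E \<Longrightarrow> \<exists>x y. x \<in> V \<and> y \<in> V \<and> x \<noteq> y \<and> e = {x, y}"
  unfolding simple_graph_def by blast

lemma sg_sub: "simple_graph V E \<Longrightarrow> e \<in> E \<Longrightarrow> e \<subseteq> V"
  using sg_edge by fastforce

lemma sg_finE: "simple_graph V E \<Longrightarrow> finite E"
proof -
  assume a: "simple_graph V E"
  then have "E \<subseteq> Pow V" using sg_sub by blast
  moreover have "finite (Pow V)" using a unfolding simple_graph_def by simp
  ultimately show ?thesis by (rule finite_subset)
qed
lemma subtree_ham:
  assumes sg: "simple_graph V E" and st: "is_subtree V E W T" and pt: "proper_tree c T"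
    and c2: "card (c ` E) \<le> 2"
  shows "\<exists>vs. distinct vs \<and> set vs = W \<and> chain T vs"
proof -
  have fE: "finite E" using sg_finE[OF sg] .
  have TE: "T \<subseteq> E" and WV: "W \<subseteq> V" and conn: "connected_graph W T" and sub: "\<forall>e\<in>T. e \<subseteq> W"
    using st unfolding is_subtree_def by auto
  have "finite V" using sg unfolding simple_graph_def by blast
  then have fW: "finite W" using WV finite_subset by auto
  have two: "\<forall>e\<in>T. \<exists>x y. x \<noteq> y \<and> e = {x, y}" using TE sg_edge[OF sg] by blast
  have "finite T" using TE fE finite_subset by auto
  then have fc: "finite (c ` T)" by simp
  have "card (c ` T) \<le> card (c ` E)" using TE fE by (intro card_mono) auto
  then show ?thesis using ham[OF fW conn sub two pt fc] c2 by simp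
qed

lemma lb2:
  assumes sg: "simple_graph V E" and n3: "card V \<ge> 3" and kp: "k_proper_coloring V E (card V) c"
  shows "card (c ` E) \<ge> 2"
proof (rule ccontr)
  assume "\<not> card (c ` E) \<ge> 2"
  then have c1: "card (c ` E) \<le> 1" by simp
  obtain W T where st: "is_subtree V E W T" and VW: "V \<subseteq> W" and pt: "proper_tree c T"
    using kp unfolding k_proper_coloring_def by blast
  have TE: "T \<subseteq> E" and WV: "W \<subseteq> V" using st unfolding is_subtree_def by auto
  have c2: "card (c ` E) \<le> 2" using c1 by simp
  obtain vs where d: "distinct vs" and sv: "set vs = W" and ch: "chain T vs"
    using subtree_ham[OF sg st pt c2] by blast
  have "W = V" using VW WV by blast
  then have "length vs = card V" using distinct_card[OF d] sv by simp
  then have l: "length vs \<ge> 3" using n3 by simp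
  have e1: "{vs!0, vs!Suc 0} \<in> T" using ch l unfolding chain_def by simp
  have e2: "{vs!Suc 0, vs!Suc (Suc 0)} \<in> T" using ch l unfolding chain_def by simp
  have ne0: "vs \<noteq> []" using l by auto
  have n02: "vs!0 \<noteq> vs!Suc (Suc 0)" using l ne0 nth_eq_iff_index_eq[OF d, of 0 "Suc (Suc 0)"] by simp
  have n01: "vs!0 \<noteq> vs!Suc 0" using l ne0 nth_eq_iff_index_eq[OF d, of 0 "Suc 0"] by simp
  have "{vs!0, vs!Suc 0} \<noteq> {vs!Suc 0, vs!Suc (Suc 0)}" using n02 n01 by (auto simp: doubleton_eq_iff)
  moreover have "{vs!0, vs!Suc 0} \<inter> {vs!Suc 0, vs!Suc (Suc 0)} \<noteq> {}" by blast
  ultimately have ne: "c {vs!0, vs!Suc 0} \<noteq> c {vs!Suc 0, vs!Suc (Suc 0)}" using pt e1 e2 unfolding proper_tree_def by (meson)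
  have sb: "{c {vs!0, vs!Suc 0}, c {vs!Suc 0, vs!Suc (Suc 0)}} \<subseteq> c ` E" using e1 e2 TE by auto
  have "finite (c ` E)" using sg_finE[OF sg] by simp
  then have "card {c {vs!0, vs!Suc 0}, c {vs!Suc 0, vs!Suc (Suc 0)}} \<le> card (c ` E)" using sb by (rule card_mono)
  then have "card (c ` E) \<ge> 2" using ne by simp
  then show False using c1 by simp
qed

lemma lb3:
  assumes sg: "simple_graph V E" and nt: "\<not> traceable V E" and kp: "k_proper_coloring V E (card V) c"
  shows "card (c ` E) \<ge> 3"
proof (rule ccontr)
  assume "\<not> card (c ` E) \<ge> 3"
  then have c1: "card (c ` E) \<le> 2" by simp
  obtain W T where st: "is_subtree V E W T" and VW: "V \<subseteq> W" and pt: "proper_tree c T"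
    using kp unfolding k_proper_coloring_def by blast
  have TE: "T \<subseteq> E" and WV: "W \<subseteq> V" using st unfolding is_subtree_def by auto
  obtain vs where d: "distinct vs" and sv: "set vs = W" and ch: "chain T vs"
    using subtree_ham[OF sg st pt c1] by blast
  have "W = V" using VW WV by blast
  have "\<forall>i. Suc i < length vs \<longrightarrow> {vs ! i, vs ! Suc i} \<in> E" using ch TE unfolding chain_def by blast
  then have "traceable V E" unfolding traceable_def
    using d sv \<open>W = V\<close> by blast
  then show False using nt by simp
qed

lemma exist_col:
  assumes sg: "simple_graph V E" and conn: "connected_graph V E"
  shows "\<exists>c. k_proper_coloring V E k c"
proof -
  have fE: "finite E" using sg_finE[OF sg] .
  obtain f :: "'a set \<Rightarrow> nat" and m where inj: "inj_on f E"
    using finite_imp_inj_to_nat_seg[OF fE] by blast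
  obtain T where TE: "T \<subseteq> E" and cT: "connected_graph V T" and nc: "\<not> has_cycle T"
    using spanning[OF fE conn] by blast
  have "\<forall>e\<in>T. e \<subseteq> V" using TE sg_sub[OF sg] by blast
  then have st: "is_subtree V E V T" using TE cT nc unfolding is_subtree_def by blast
  have "proper_tree f T" unfolding proper_tree_def
  proof (intro ballI impI)
    fix e g assume "e \<in> T" "g \<in> T" "e \<noteq> g \<and> e \<inter> g \<noteq> {}"
    then show "f e \<noteq> f g" using inj TE inj_on_eq_iff by (metis subsetD)
  qed
  then have "k_proper_coloring V E k f" using st unfolding k_proper_coloring_def by blast
  then show ?thesis by blast
qed

lemma least_eq:
  assumes "\<exists>c. Q c \<and> card (c ` E) \<le> m" and "\<forall>c. Q c \<longrightarrow> m \<le> card (c ` E)"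
  shows "(LEAST x. \<exists>c. Q c \<and> card (c ` E) = x) = (m::nat)"
proof (rule Least_equality)
  obtain c where "Q c" "card (c ` E) \<le> m" using assms(1) by blast
  moreover then have "m \<le> card (c ` E)" using assms(2) by blast
  ultimately show "\<exists>c. Q c \<and> card (c ` E) = m" by (intro exI[of _ c]) simp
next
  fix y assume "\<exists>c. Q c \<and> card (c ` E) = y"
  then show "m \<le> y" using assms(2) by blast
qed



lemma idx_uniq:
  assumes d: "distinct vs" and i: "Suc i < length vs" and j: "Suc j < length vs"
    and eq: "{vs!i, vs!Suc i} = {vs!j, vs!Suc j}"
  shows "i = j"
proof -
  have A: "vs!i = vs!j \<or> vs!i = vs!Suc j" using eq by (auto simp: doubleton_eq_iff)
  have B: "vs!Suc i = vs!j \<or> vs!Suc i = vs!Suc j" using eq by (auto simp: doubleton_eq_iff)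
  have f1: "(vs!i = vs!j) = (i = j)" using i j by (intro nth_eq_iff_index_eq[OF d]) auto
  have f2: "(vs!i = vs!Suc j) = (i = Suc j)" using i j by (intro nth_eq_iff_index_eq[OF d]) auto
  have f3: "(vs!Suc i = vs!j) = (Suc i = j)" using i j by (intro nth_eq_iff_index_eq[OF d]) auto
  have f4: "(vs!Suc i = vs!Suc j) = (Suc i = Suc j)" using i j by (intro nth_eq_iff_index_eq[OF d]) auto
  have "(i = j \<or> i = Suc j) \<and> (Suc i = j \<or> Suc i = Suc j)" using A B f1 f2 f3 f4 by simp
  then show ?thesis by arith
qed

lemma idx_adj:
  assumes d: "distinct vs" and i: "Suc i < length vs" and j: "Suc j < length vs"
    and ne: "{vs!i, vs!Suc i} \<inter> {vs!j, vs!Suc j} \<noteq> {}" and ij: "i \<noteq> j"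
  shows "j = Suc i \<or> i = Suc j"
proof -
  have "vs!i = vs!j \<or> vs!i = vs!Suc j \<or> vs!Suc i = vs!j \<or> vs!Suc i = vs!Suc j" (is ?D) using ne by auto
  have f1: "(vs!i = vs!j) = (i = j)" using i j by (intro nth_eq_iff_index_eq[OF d]) auto
  have f2: "(vs!i = vs!Suc j) = (i = Suc j)" using i j by (intro nth_eq_iff_index_eq[OF d]) auto
  have f3: "(vs!Suc i = vs!j) = (Suc i = j)" using i j by (intro nth_eq_iff_index_eq[OF d]) auto
  have f4: "(vs!Suc i = vs!Suc j) = (Suc i = Suc j)" using i j by (intro nth_eq_iff_index_eq[OF d]) auto
  from \<open>?D\<close> have "i = j \<or> i = Suc j \<or> Suc i = j \<or> Suc i = Suc j" using f1 f2 f3 f4 by simp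
  then show ?thesis using ij by arith
qed

lemma trace_col:
  assumes sg: "simple_graph V E" and Vne: "V \<noteq> {}" and d: "distinct vs" and sv: "set vs = V"
    and ch: "\<forall>i. Suc i < length vs \<longrightarrow> {vs ! i, vs ! Suc i} \<in> E"
  shows "\<exists>c. k_proper_coloring V E k c \<and> card (c ` E) \<le> 2"
proof -
  define T0 where "T0 = (\<lambda>i. {vs!i, vs!Suc i}) ` {i. Suc i < length vs}"
  have fT0: "finite T0" unfolding T0_def
    by (rule finite_imageI) (rule finite_subset[of _ "{..<length vs}"], auto)
  have T0E: "T0 \<subseteq> E" using ch unfolding T0_def by auto
  have chT0: "\<forall>i. Suc i < length vs \<longrightarrow> {vs ! i, vs ! Suc i} \<in> T0" unfolding T0_def by auto
  have cT0: "connected_graph V T0"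
    unfolding connected_graph_def
  proof (intro conjI ballI)
    show "V \<noteq> {}" using Vne .
  next
    fix x y assume "x \<in> V" "y \<in> V"
    then obtain a b where a: "a < length vs" "vs!a = x" and b: "b < length vs" "vs!b = y"
      using sv by (metis in_set_conv_nth)
    have "(vs!0, x) \<in> (rel_of T0)\<^sup>*" using path_conn[OF chT0 a(1)] a by simp
    then have "(x, vs!0) \<in> (rel_of T0)\<^sup>*" by (rule rel_sym)
    moreover have "(vs!0, y) \<in> (rel_of T0)\<^sup>*" using path_conn[OF chT0 b(1)] b by simp
    ultimately show "(x, y) \<in> (rel_of T0)\<^sup>*" by (rule rtrancl_trans)
  qed
  obtain T where TT0: "T \<subseteq> T0" and cT: "connected_graph V T" and nc: "\<not> has_cycle T"
    using spanning[OF fT0 cT0] by blast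
  have TE: "T \<subseteq> E" using TT0 T0E by blast
  have "\<forall>e\<in>T. e \<subseteq> V" using TE sg_sub[OF sg] by blast
  then have st: "is_subtree V E V T" using TE cT nc unfolding is_subtree_def by blast
  define c where "c = (\<lambda>e. if \<exists>i. Suc i < length vs \<and> e = {vs!i, vs!Suc i} \<and> even i then 0 else (1::nat))"
  have cval: "c {vs!i, vs!Suc i} = (if even i then 0 else 1)" if i: "Suc i < length vs" for i
  proof -
    have "(\<exists>j. Suc j < length vs \<and> {vs!i, vs!Suc i} = {vs!j, vs!Suc j} \<and> even j) \<longleftrightarrow> even i"
    proof
      assume "\<exists>j. Suc j < length vs \<and> {vs!i, vs!Suc i} = {vs!j, vs!Suc j} \<and> even j"
      then obtain j where "Suc j < length vs" "{vs!i, vs!Suc i} = {vs!j, vs!Suc j}" "even j" by blast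
      then show "even i" using idx_uniq[OF d i] by metis
    next
      assume "even i" then show "\<exists>j. Suc j < length vs \<and> {vs!i, vs!Suc i} = {vs!j, vs!Suc j} \<and> even j"
        using i by blast
    qed
    then show ?thesis unfolding c_def by simp
  qed
  have "proper_tree c T0" unfolding proper_tree_def
  proof (intro ballI impI)
    fix e g assume e: "e \<in> T0" and g: "g \<in> T0" and eg: "e \<noteq> g \<and> e \<inter> g \<noteq> {}"
    obtain i where i: "Suc i < length vs" "e = {vs!i, vs!Suc i}" using e unfolding T0_def by blast
    obtain j where j: "Suc j < length vs" "g = {vs!j, vs!Suc j}" using g unfolding T0_def by blast
    have "i \<noteq> j" using eg i j by blast
    then have "j = Suc i \<or> i = Suc j" using idx_adj[OF d i(1) j(1)] eg i j by blast
    then show "c e \<noteq> c g" using cval[OF i(1)] cval[OF j(1)] i j by auto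
  qed
  then have "proper_tree c T" using TT0 unfolding proper_tree_def by blast
  then have "k_proper_coloring V E k c" using st unfolding k_proper_coloring_def by blast
  moreover have "card (c ` E) \<le> 2"
  proof -
    have "c ` E \<subseteq> {0, 1}" unfolding c_def by auto
    then have "card (c ` E) \<le> card {0::nat, 1}" by (intro card_mono) auto
    then show ?thesis by simp
  qed
  ultimately show ?thesis by blast
qed


lemma nontrace_col:
  assumes sg: "simple_graph V E" and conn: "connected_graph V E" and nt: "\<not> traceable V E"
    and n4: "card V \<ge> 4" and hyp: "proper_index V E (card V - 1) = 2"
  shows "\<exists>c. k_proper_coloring V E (card V) c \<and> card (c ` E) \<le> 3"
proof -
  have fE: "finite E" using sg_finE[OF sg] .
  have fV: "finite V" using sg unfolding simple_graph_def by blast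
  obtain c0 where "k_proper_coloring V E (card V - 1) c0" using exist_col[OF sg conn] by blast
  then have ex: "\<exists>m c. k_proper_coloring V E (card V - 1) c \<and> card (c ` E) = m" by blast
  have "\<exists>c. k_proper_coloring V E (card V - 1) c \<and> card (c ` E) = 2"
    using LeastI_ex[OF ex] hyp unfolding proper_index_def by simp
  then obtain c where kp: "k_proper_coloring V E (card V - 1) c" and c2: "card (c ` E) = 2" by blast
  obtain v where v: "v \<in> V" using n4 by fastforce
  have cS: "card (V - {v}) = card V - 1" using v fV by simp
  obtain W T where st: "is_subtree V E W T" and SW: "V - {v} \<subseteq> W" and pt: "proper_tree c T"
    using kp cS unfolding k_proper_coloring_def by blast
  have TE: "T \<subseteq> E" and WV: "W \<subseteq> V" and cWT: "connected_graph W T"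
    and subW: "\<forall>e\<in>T. e \<subseteq> W" and nc: "\<not> has_cycle T"
    using st unfolding is_subtree_def by auto
  have vW: "v \<notin> W"
  proof
    assume "v \<in> W"
    then have WV': "W = V" using SW WV by blast
    obtain vs where d: "distinct vs" and sv: "set vs = W" and ch: "chain T vs"
      using subtree_ham[OF sg st pt] c2 by auto
    have "\<forall>i. Suc i < length vs \<longrightarrow> {vs ! i, vs ! Suc i} \<in> E" using ch TE unfolding chain_def by blast
    then have "traceable V E" unfolding traceable_def using d sv WV' by blast
    then show False using nt by simp
  qed
  have W: "W = V - {v}" using SW WV vW by blast
  have "card (V - {v}) \<ge> 3" using cS n4 by simp
  then have "V - {v} \<noteq> {}" by (intro notI) simp
  then obtain w where w: "w \<in> V" "w \<noteq> v" by blast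
  have "(v, w) \<in> (rel_of E)\<^sup>*" using conn v w unfolding connected_graph_def by blast
  then have "\<exists>u. (v, u) \<in> rel_of E" using w(2) by (cases rule: converse_rtranclE) auto
  then obtain u where vu: "(v, u) \<in> rel_of E" by blast
  then have uvE: "{u, v} \<in> E" by (simp add: insert_commute)
  obtain x y where xy: "x \<in> V" "y \<in> V" "x \<noteq> y" "{u, v} = {x, y}" using sg_edge[OF sg uvE] by blast
  have uv: "u \<noteq> v" using xy by auto
  have uV: "u \<in> V" using sg_sub[OF sg uvE] by simp
  have uW: "u \<in> W" using W uV uv by simp
  define T' where "T' = insert {u, v} T"
  define f where "f = Suc (Max (c ` E))"
  have fnot: "f \<notin> c ` E"
  proof
    assume "f \<in> c ` E"
    then have "f \<le> Max (c ` E)" using fE by (intro Max_ge) auto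
    then show False unfolding f_def by simp
  qed
  define c' where "c' = (\<lambda>e. if e = {u, v} then f else c e)"
  have uvT: "{u, v} \<notin> T" using subW vW by blast
  have pt': "proper_tree c' T'" unfolding proper_tree_def
  proof (intro ballI impI)
    fix e g assume e: "e \<in> T'" and g: "g \<in> T'" and eg: "e \<noteq> g \<and> e \<inter> g \<noteq> {}"
    show "c' e \<noteq> c' g"
    proof (cases "e = {u, v}")
      case True
      then have "g \<in> T" "g \<noteq> {u, v}" using g eg unfolding T'_def by auto
      then show ?thesis using True fnot TE unfolding c'_def by auto
    next
      case False
      then have eT: "e \<in> T" using e unfolding T'_def by auto
      show ?thesis
      proof (cases "g = {u, v}")
        case True
        then show ?thesis using False eT fnot TE unfolding c'_def by auto
      next
        case False
        then have "g \<in> T" using g unfolding T'_def by auto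
        then show ?thesis using eT eg pt \<open>e \<noteq> {u, v}\<close> False unfolding proper_tree_def c'_def by auto
      qed
    qed
  qed
  have T'E: "T' \<subseteq> E" using TE uvE unfolding T'_def by blast
  have subV: "\<forall>e\<in>T'. e \<subseteq> V" using T'E sg_sub[OF sg] by blast
  have nc': "\<not> has_cycle T'" unfolding T'_def using pendant_acyclic[OF nc subW vW uv] .
  have mono: "(rel_of T)\<^sup>* \<subseteq> (rel_of T')\<^sup>*" unfolding T'_def by (intro rtrancl_mono) auto
  have fromu: "(u, z) \<in> (rel_of T')\<^sup>*" if z: "z \<in> V" for z
  proof (cases "z = v")
    case True
    have "(u, v) \<in> rel_of T'" unfolding T'_def by simp
    then show ?thesis using True by (simp add: r_into_rtrancl)
  next
    case False
    then have "z \<in> W" using W z by simp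
    then have "(u, z) \<in> (rel_of T)\<^sup>*" using cWT uW unfolding connected_graph_def by blast
    then show ?thesis using mono by blast
  qed
  have cT': "connected_graph V T'" unfolding connected_graph_def
  proof (intro conjI ballI)
    show "V \<noteq> {}" using v by blast
  next
    fix a b assume "a \<in> V" "b \<in> V"
    then have "(u, a) \<in> (rel_of T')\<^sup>*" "(u, b) \<in> (rel_of T')\<^sup>*" using fromu by auto
    then have "(a, u) \<in> (rel_of T')\<^sup>*" "(u, b) \<in> (rel_of T')\<^sup>*" using rel_sym by auto
    then show "(a, b) \<in> (rel_of T')\<^sup>*" by (rule rtrancl_trans)
  qed
  have st': "is_subtree V E V T'" unfolding is_subtree_def using T'E subV cT' nc' by blast
  have "k_proper_coloring V E (card V) c'" unfolding k_proper_coloring_def using st' pt' by blast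
  moreover have "card (c' ` E) \<le> 3"
  proof -
    have "c' ` E \<subseteq> insert f (c ` E)" unfolding c'_def by auto
    then have "card (c' ` E) \<le> card (insert f (c ` E))" using fE by (intro card_mono) auto
    also have "\<dots> = 3" using fnot c2 fE by simp
    finally show ?thesis .
  qed
  ultimately show ?thesis by blast
qed

theorem mainTheorem6:
  fixes V :: "'a set" and E :: "'a set set"
  assumes "simple_graph V E"
    and "connected_graph V E"
    and "card V \<ge> 4"
    and "\<forall>k. 3 \<le> k \<and> k \<le> card V - 1 \<longrightarrow> proper_index V E k = 2"
  shows "(traceable V E \<longrightarrow> proper_index V E (card V) = 2) \<and>
         (\<not> traceable V E \<longrightarrow> proper_index V E (card V) = 3)"
proof (intro conjI impI)
  assume tr: "traceable V E"
  then obtain vs where d: "distinct vs" and sv: "set vs = V"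
    and ch: "\<forall>i. Suc i < length vs \<longrightarrow> {vs ! i, vs ! Suc i} \<in> E"
    unfolding traceable_def by blast
  have Vne: "V \<noteq> {}" using assms(2) unfolding connected_graph_def by blast
  show "proper_index V E (card V) = 2" unfolding proper_index_def
  proof (rule least_eq)
    show "\<exists>c. k_proper_coloring V E (card V) c \<and> card (c ` E) \<le> 2"
      using trace_col[OF assms(1) Vne d sv ch] .
    show "\<forall>c. k_proper_coloring V E (card V) c \<longrightarrow> 2 \<le> card (c ` E)"
      using lb2[OF assms(1)] assms(3) by simp
  qed
next
  assume nt: "\<not> traceable V E"
  have h: "proper_index V E (card V - 1) = 2" using assms(3,4) by simp
  show "proper_index V E (card V) = 3" unfolding proper_index_def
  proof (rule least_eq)
    show "\<exists>c. k_proper_coloring V E (card V) c \<and> card (c ` E) \<le> 3"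
      using nontrace_col[OF assms(1,2) nt assms(3) h] .
    show "\<forall>c. k_proper_coloring V E (card V) c \<longrightarrow> 3 \<le> card (c ` E)"
      using lb3[OF assms(1) nt] by simp
  qed
qed

end
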